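(* For every $n\ge 2$, $FlDr_n^{3M}=FlDr_n$. That is, a point $P\in \mathbb{TP}^{\binom n1-1}\times\cdots\times\mathbb{TP}^{\binom n{n-1}-1}$ is a solution of the tropicalization of every incidence-Plücker relation if and only if it is a solution of the tropicalization of every three-term incidence-Plücker relation and its support forms a flag matroid.
   Context: Let $[n]=\{1,\dots,n\}$; variables $P_I$ are indexed by subsets $I\subset[n]$ with $1\le|I|\le n-1$. Incidence-Plücker relations: for $1\le r\le s\le n$, $I\subset[n]$ with $|I|=r-1$ and $J\subset[n]$ with $|J|=s+1$, the incidence-Plücker relation is $\sum_{j\in J\setminus I}\mathrm{sign}(j,I,J)\,P_{I\cup\{j\}}P_{J\setminus\{j\}}$, where $\mathrm{sign}(j,I,J)=(-1)^{|\{k\in J:\,k<j\}|+|\{i\in I:\,j<i\}|}$. $\mathfrak P_{IP;n}$ is the set of all of them; $\mathfrak P^{3\text{ term}}_{IP;n}$ the set of those with exactly three terms (i.e. $|J\setminus I|=3$). Tropical notions: $\mathbb T=\mathbb R\cup\{\infty\}$; $\mathbb{TP}^{m-1}=(\mathbb T^m\setminus\{(\infty,\dots,\infty)\})/\sim$ with $x\sim y$ iff $x=y+(c,\dots,c)$, $c\in\mathbb R$; the $k$-th factor of the product has coordinates indexed by $k$-subsets of $[n]$. For a polynomial $p=\sum_b c_bx^b$ with real coefficients (distinct exponents $b$, all $c_b\neq0$), the value of the term $c_bx^b$ at $y$ is $b\cdot y$ (with $0\cdot\infty=0$); $y$ is a solution of the tropicalization of $p$ if the minimum term value is attained by at least two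 terms. $\overline{\mathrm{trop}}(\mathcal P)$ is the set of points solving the tropicalizations of all $p\in\mathcal P$. The complete flag Dressian is $FlDr_n=\overline{\mathrm{trop}}(\mathfrak P_{IP;n})$. The support of $P$ is $\{I:P_I\ne\infty\}$. A (complete) flag matroid on $[n]$ is a sequence $(\mathcal M_1,\dots,\mathcal M_{n-1})$ of matroids on $[n]$, $\mathrm{rank}\,\mathcal M_i=i$, such that for all $j<k$ every basis of $\mathcal M_j$ is contained in some basis of $\mathcal M_k$ and every basis of $\mathcal M_k$ contains some basis of $\mathcal M_j$; the support forms a flag matroid if its $k$-element members are the bases of $\mathcal M_k$ for such a flag matroid. $FlDr_n^{3M}$ is the set of points of $\overline{\mathrm{trop}}(\mathfrak P^{3\text{ term}}_{IP;n})$ whose support forms a flag matroid. *)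

theory Defs
  imports "HOL-Library.Extended_Real"
begin

text \<open>Tropical numbers T = R \<union> {\<infinity>} are modelled inside ereal: a coordinate is a real
  number or PInfty (the value MInfty is excluded).  A point of the product
  TP^(n choose 1 - 1) x ... x TP^(n choose n-1 - 1) is given by a representative
  P :: nat set \<Rightarrow> ereal, whose relevant coordinates are P I for I \<subseteq> {1..n},
  1 \<le> card I \<le> n-1.\<close>

definition in_TP_product :: "nat \<Rightarrow> (nat set \<Rightarrow> ereal) \<Rightarrow> bool" where
  "in_TP_product n P \<longleftrightarrow>
     (\<forall>I. I \<subseteq> {1..n} \<and> 1 \<le> card I \<and> card I \<le> n - 1 \<longrightarrow> P I \<noteq> -\<infinity>) \<and>
     (\<forall>k\<in>{1..n-1}. \<exists>I. I \<subseteq> {1..n} \<and> card I = k \<and> P I \<noteq> \<infinity>)"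

text \<open>Sign of a term of an incidence-Pluecker relation (only relevant for the
  polynomial itself; the tropicalization only uses that it is nonzero).\<close>
definition ip_sign :: "nat \<Rightarrow> nat set \<Rightarrow> nat set \<Rightarrow> int" where
  "ip_sign j I J = (-1) ^ (card {k\<in>J. k < j} + card {i\<in>I. j < i})"

definition ip_index :: "nat \<Rightarrow> nat set \<Rightarrow> nat set \<Rightarrow> bool" where
  "ip_index n I J \<longleftrightarrow> I \<subseteq> {1..n} \<and> J \<subseteq> {1..n} \<and>
     (\<exists>r s. 1 \<le> r \<and> r \<le> s \<and> s \<le> n \<and> card I = r - 1 \<and> card J = s + 1)"

text \<open>Value at P of the term sign(j,I,J) P_{I\<union>{j}} P_{J-{j}} (exponent vector dotted with P).\<close>
definition ip_term_val :: "(nat set \<Rightarrow> ereal) \<Rightarrow> nat set \<Rightarrow> nat set \<Rightarrow> nat \<Rightarrow> ereal" where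
  "ip_term_val P I J j = P (insert j I) + P (J - {j})"

definition trop_solves_ip :: "(nat set \<Rightarrow> ereal) \<Rightarrow> nat set \<Rightarrow> nat set \<Rightarrow> bool" where
  "trop_solves_ip P I J \<longleftrightarrow>
     (\<exists>j1\<in>J - I. \<exists>j2\<in>J - I. j1 \<noteq> j2 \<and>
        (\<forall>k\<in>J - I. ip_term_val P I J j1 \<le> ip_term_val P I J k \<and>
                    ip_term_val P I J j2 \<le> ip_term_val P I J k))"

definition matroid_bases :: "nat set \<Rightarrow> nat set set \<Rightarrow> bool" where
  "matroid_bases E B \<longleftrightarrow> finite E \<and> B \<noteq> {} \<and> (\<forall>X\<in>B. X \<subseteq> E) \<and>
     (\<forall>B1\<in>B. \<forall>B2\<in>B. \<forall>x\<in>B1 - B2. \<exists>y\<in>B2 - B1. insert y (B1 - {x}) \<in> B)"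

definition flag_matroid :: "nat \<Rightarrow> (nat \<Rightarrow> nat set set) \<Rightarrow> bool" where
  "flag_matroid n M \<longleftrightarrow>
     (\<forall>k\<in>{1..n-1}. matroid_bases {1..n} (M k) \<and> (\<forall>X\<in>M k. card X = k)) \<and>
     (\<forall>j k. 1 \<le> j \<and> j < k \<and> k \<le> n - 1 \<longrightarrow>
        (\<forall>X\<in>M j. \<exists>Y\<in>M k. X \<subseteq> Y) \<and> (\<forall>Y\<in>M k. \<exists>X\<in>M j. X \<subseteq> Y))"

definition support_forms_flag_matroid :: "nat \<Rightarrow> (nat set \<Rightarrow> ereal) \<Rightarrow> bool" where
  "support_forms_flag_matroid n P \<longleftrightarrow>
     flag_matroid n (\<lambda>k. {I. I \<subseteq> {1..n} \<and> card I = k \<and> P I \<noteq> \<infinity>})"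

definition FlDr :: "nat \<Rightarrow> (nat set \<Rightarrow> ereal) set" where
  "FlDr n = {P. in_TP_product n P \<and> (\<forall>I J. ip_index n I J \<longrightarrow> trop_solves_ip P I J)}"

definition FlDr_3M :: "nat \<Rightarrow> (nat set \<Rightarrow> ereal) set" where
  "FlDr_3M n = {P. in_TP_product n P \<and>
     (\<forall>I J. ip_index n I J \<and> card (J - I) = 3 \<longrightarrow> trop_solves_ip P I J) \<and>
     support_forms_flag_matroid n P}"

end

theory Submission
  imports Defs
begin



definition EXc :: "(nat set \<Rightarrow> ereal) \<Rightarrow> nat set \<Rightarrow> nat set \<Rightarrow> nat \<Rightarrow> bool" where
  "EXc f X Y u \<longleftrightarrow> (\<exists>v\<in>Y - X. f (insert v (X - {u})) + f (insert u (Y - {v})) \<le> f X + f Y)"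

lemma trop_to_EX:
  assumes "trop_solves_ip f I J" "x \<in> J - I"
  shows "EXc f (insert x I) (J - {x}) x"
proof -
  from assms(1) obtain j1 j2 where j: "j1 \<in> J - I" "j2 \<in> J - I" "j1 \<noteq> j2"
    and m: "\<forall>k\<in>J - I. ip_term_val f I J j1 \<le> ip_term_val f I J k \<and> ip_term_val f I J j2 \<le> ip_term_val f I J k"
    unfolding trop_solves_ip_def by blast
  obtain v where v: "v \<in> J - I" "v \<noteq> x" "ip_term_val f I J v \<le> ip_term_val f I J x"
    using j m assms(2) by metis
  have e1: "insert v (insert x I - {x}) = insert v I" using assms(2) v by auto
  have e2: "insert x (J - {x} - {v}) = J - {v}" using assms(2) v by auto
  have "v \<in> (J - {x}) - insert x I" using v by auto
  moreover have "f (insert v (insert x I - {x})) + f (insert x (J - {x} - {v})) \<le> f (insert x I) + f (J - {x})"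
    using v(3) e1 e2 unfolding ip_term_val_def by simp
  ultimately show ?thesis unfolding EXc_def by blast
qed

lemma EX_to_trop:
  assumes "finite J" "J - I \<noteq> {}" "\<forall>x\<in>J - I. EXc f (insert x I) (J - {x}) x"
  shows "trop_solves_ip f I J"
proof -
  let ?t = "ip_term_val f I J"
  have fin: "finite (?t ` (J - I))" using assms(1) by simp
  have ne: "?t ` (J - I) \<noteq> {}" using assms(2) by simp
  obtain j1 where j1: "j1 \<in> J - I" "?t j1 = Min (?t ` (J - I))"
    using Min_in[OF fin ne] by force
  have mn: "\<forall>k\<in>J - I. ?t j1 \<le> ?t k" using j1(2) Min_le[OF fin] by simp
  from assms(3) j1(1) obtain v where v: "v \<in> (J - {j1}) - insert j1 I"
    "f (insert v (insert j1 I - {j1})) + f (insert j1 (J - {j1} - {v})) \<le> f (insert j1 I) + f (J - {j1})"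
    unfolding EXc_def by blast
  have e1: "insert v (insert j1 I - {j1}) = insert v I" using j1 v by auto
  have e2: "insert j1 (J - {j1} - {v}) = J - {v}" using j1 v by auto
  have "?t v \<le> ?t j1" using v(2) e1 e2 unfolding ip_term_val_def by simp
  hence "\<forall>k\<in>J - I. ?t v \<le> ?t k" using mn by (meson order_trans)
  moreover have "v \<in> J - I" "v \<noteq> j1" using v by auto
  ultimately show ?thesis unfolding trop_solves_ip_def using j1(1) mn by blast
qed



lemma card_diff_sym:
  assumes "finite X" "finite Y" "card X = card Y"
  shows "card (X - Y) = card (Y - X)"
proof -
  have "card X = card (X - Y) + card (X \<inter> Y)" using assms
    by (metis card_Diff_subset_Int card_mono diff_add inf_le1 finite_Int)
  moreover have "card Y = card (Y - X) + card (Y \<inter> X)" using assms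
    by (metis card_Diff_subset_Int card_mono diff_add inf_le1 finite_Int)
  ultimately show ?thesis using assms(3) by (simp add: Int_commute)
qed

lemma card_diff_le:
  assumes "finite X" "finite Y" "card X \<le> card Y"
  shows "card (X - Y) \<le> card (Y - X)"
proof -
  have "card X = card (X - Y) + card (X \<inter> Y)" using assms
    by (metis card_Diff_subset_Int card_mono diff_add inf_le1 finite_Int)
  moreover have "card Y = card (Y - X) + card (Y \<inter> X)" using assms
    by (metis card_Diff_subset_Int card_mono diff_add inf_le1 finite_Int)
  ultimately show ?thesis using assms(3) by (simp add: Int_commute)
qed

lemma dual_exch:
  assumes mb: "matroid_bases E B" and ck: "\<forall>X\<in>B. card X = k"
  shows "X \<in> B \<Longrightarrow> Y \<in> B \<Longrightarrow> z \<in> X - Y \<Longrightarrow> \<exists>v\<in>Y - X. insert z (Y - {v}) \<in> B"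
proof (induction "card (X - Y)" arbitrary: X rule: less_induct)
  case less
  have finE: "finite E" and sub: "\<forall>X\<in>B. X \<subseteq> E"
    and exch: "\<forall>B1\<in>B. \<forall>B2\<in>B. \<forall>x\<in>B1 - B2. \<exists>y\<in>B2 - B1. insert y (B1 - {x}) \<in> B"
    using mb unfolding matroid_bases_def by auto
  have fX: "finite X" and fY: "finite Y" using less sub finE finite_subset by blast+
  show ?case
  proof (cases "X - Y = {z}")
    case True
    have "card (Y - X) = 1" using card_diff_sym[OF fX fY] ck less True by simp
    then obtain v where v: "Y - X = {v}" by (meson card_1_singletonE)
    have "insert z (Y - {v}) = X" using True v less by blast
    then show ?thesis using v less by auto
  next
    case False
    then obtain x where x: "x \<in> X - Y" "x \<noteq> z" using less by blast
    then obtain y where y: "y \<in> Y - X" "insert y (X - {x}) \<in> B" using exch less by blast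
    let ?X' = "insert y (X - {x})"
    have eq: "?X' - Y = (X - Y) - {x}" using y by auto
    have lt: "card (?X' - Y) < card (X - Y)" unfolding eq
      using x fX by (meson card_Diff1_less finite_Diff)
    have "z \<in> ?X' - Y" using less x by auto
    from less(1)[OF lt y(2) less(3) this] obtain v where v: "v \<in> Y - ?X'" "insert z (Y - {v}) \<in> B" by blast
    have "v \<in> Y - X" using v x by auto
    then show ?thesis using v by blast
  qed
qed

lemma lemL:
  assumes fm: "flag_matroid n M" and j: "1 \<le> j" "j < k" "k \<le> n - 1" and X: "X \<in> M j" "Y \<in> M k"
  shows "\<exists>W \<in> M (k-1). X \<inter> Y \<subseteq> W \<and> W \<subseteq> Y"
proof -
  have km: "k - 1 \<in> {1..n-1}" using j by auto
  have mb: "matroid_bases {1..n} (M (k-1))" and ck: "\<forall>X\<in>M (k-1). card X = k - 1"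
    using fm km unfolding flag_matroid_def by blast+
  have conc: "\<And>a b. 1 \<le> a \<Longrightarrow> a < b \<Longrightarrow> b \<le> n - 1 \<Longrightarrow>
      (\<forall>X\<in>M a. \<exists>Y\<in>M b. X \<subseteq> Y) \<and> (\<forall>Y\<in>M b. \<exists>X\<in>M a. X \<subseteq> Y)"
    using fm unfolding flag_matroid_def by blast
  obtain A where A: "A \<in> M (k-1)" "X \<subseteq> A"
  proof (cases "j < k - 1")
    case True
    have "k - 1 \<le> n - 1" using j by auto
    then show ?thesis using conc[of j "k-1"] True j X that by blast
  next
    case False
    then have "j = k - 1" using j by auto
    then show ?thesis using X that by auto
  qed
  have k1: "1 \<le> k - 1" "k - 1 < k" using j by auto
  obtain W0 where W0: "W0 \<in> M (k-1)" "W0 \<subseteq> Y" using conc[OF k1 j(3)] X by blast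
  have finA: "finite A" using mb A unfolding matroid_bases_def by (meson finite_subset)
  have claim: "\<And>W. W \<in> M (k-1) \<Longrightarrow> W \<subseteq> Y \<Longrightarrow> \<exists>W'\<in>M (k-1). A \<inter> Y \<subseteq> W' \<and> W' \<subseteq> Y"
  proof -
    fix W
    show "W \<in> M (k-1) \<Longrightarrow> W \<subseteq> Y \<Longrightarrow> \<exists>W'\<in>M (k-1). A \<inter> Y \<subseteq> W' \<and> W' \<subseteq> Y"
    proof (induction "card (A \<inter> Y - W)" arbitrary: W rule: less_induct)
      case less
      show ?case
      proof (cases "A \<inter> Y \<subseteq> W")
        case True
        then show ?thesis using less by blast
      next
        case False
        then obtain a where a: "a \<in> A \<inter> Y" "a \<notin> W" by blast
        from dual_exch[OF mb ck A(1) less(2), of a] a obtain v where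
          v: "v \<in> W - A" "insert a (W - {v}) \<in> M (k-1)" by blast
        let ?W = "insert a (W - {v})"
        have eq: "A \<inter> Y - ?W = (A \<inter> Y - W) - {a}" using v by auto
        have lt: "card (A \<inter> Y - ?W) < card (A \<inter> Y - W)" unfolding eq
          using a finA by (meson DiffI Int_iff card_Diff1_less finite_Diff finite_Int)
        have "?W \<subseteq> Y" using less a by auto
        from less(1)[OF lt v(2) this] show ?thesis .
      qed
    qed
  qed
  from claim[OF W0] obtain W where "W\<in>M (k-1)" "A \<inter> Y \<subseteq> W" "W \<subseteq> Y" by blast
  then show ?thesis using A by blast
qed



lemma arith1:
  fixes a b zv av' zu yv' :: ereal
  assumes "a \<noteq> \<infinity>" "a \<noteq> -\<infinity>" "b \<noteq> \<infinity>" "b\<noteq>-\<infinity>" "zv \<noteq> \<infinity>" "zv \<noteq> -\<infinity>"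
    "av' \<noteq> -\<infinity>" "zu \<noteq> -\<infinity>" "yv' \<noteq> -\<infinity>"
    "av' + zu \<le> a + zv" "a + b < av' + yv'"
  shows "zu + b < zv + yv' \<and> av' \<noteq> \<infinity> \<and> zu \<noteq> \<infinity>"
proof -
  obtain a1 b1 zv1 where "a = ereal a1" "b = ereal b1" "zv = ereal zv1"
    using assms by (metis ereal_cases)
  then show ?thesis using assms by (cases av'; cases zu; cases yv') auto
qed

lemma arith2:
  fixes zv' yv zu b :: ereal
  assumes "zu \<noteq> \<infinity>" "b \<noteq> \<infinity>" "zv' \<noteq> -\<infinity>" "yv \<noteq> -\<infinity>" "zv' + yv \<le> zu + b"
  shows "zv' \<noteq> \<infinity> \<and> yv \<noteq> \<infinity>"
  using assms by (cases zv'; cases yv; cases zu; cases b) auto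

lemma arith3:
  fixes a b zv av' zu av yv zv' :: ereal
  assumes "zv' + yv \<le> zu + b" "av' + zu \<le> a + zv" "a + b < av + yv"
   "a \<noteq> \<infinity>" "a \<noteq> -\<infinity>" "b \<noteq> \<infinity>" "b\<noteq>-\<infinity>" "zv \<noteq> \<infinity>" "zv \<noteq> -\<infinity>"
   "av' \<noteq> \<infinity>" "av' \<noteq> -\<infinity>" "zu \<noteq> \<infinity>" "zu \<noteq> -\<infinity>" "av \<noteq> \<infinity>" "av \<noteq> -\<infinity>"
   "yv \<noteq> \<infinity>" "yv \<noteq> -\<infinity>" "zv' \<noteq> \<infinity>" "zv' \<noteq> -\<infinity>"
  shows "zv' + av' < zv + av"
proof -
  obtain a1 b1 zv1 av'1 zu1 av1 yv1 zv'1 where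
    "a = ereal a1" "b = ereal b1" "zv = ereal zv1" "av' = ereal av'1" "zu = ereal zu1"
    "av = ereal av1" "yv = ereal yv1" "zv' = ereal zv'1"
    using assms by (metis ereal_cases)
  then show ?thesis using assms by simp
qed



lemma step_contra:
  fixes f :: "nat set \<Rightarrow> ereal"
  assumes H1: "\<forall>S. f S \<noteq> -\<infinity>"
  and H3: "\<forall>I J. ip_index n I J \<and> card (J - I) = 3 \<longrightarrow> trop_solves_ip f I J"
  and Yn: "Y \<subseteq> {1..n}" and un: "u \<in> {1..n}" and cY: "2 \<le> card Y" "card Y \<le> n - 1"
  and uX: "u \<in> X" "u \<notin> Y" and Zs: "Zs \<subseteq> X" "Zs \<inter> Y = {}" "u \<notin> Zs" "card Zs \<le> 1"
  and Zsn: "Zs \<subseteq> {1..n}"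
  and IHZ: "\<forall>v\<in>Y - X. EXc f X ((Y - {v}) \<union> Zs) u"
  and viol: "\<forall>w\<in>Y - X. f X + f Y < f (insert w (X - {u})) + f (insert u (Y - {w}))"
  and fX: "f X \<noteq> \<infinity>" and fY: "f Y \<noteq> \<infinity>"
  and ex0: "v0 \<in> Y - X" "f ((Y - {v0}) \<union> Zs) \<noteq> \<infinity>"
  shows False
proof -
  define Z where "Z = (\<lambda>w. (Y - {w}) \<union> Zs)"
  define A where "A = (\<lambda>w. insert w (X - {u}))"
  define \<Phi> where "\<Phi> = (\<lambda>w. f (Z w) + f (A w))"
  have finY: "finite Y" using Yn finite_subset by blast
  have finZs: "finite Zs" using Zsn finite_subset by blast
  have key: "\<exists>v'\<in>Y-X. f (Z v') \<noteq> \<infinity> \<and> f (A v') \<noteq> \<infinity> \<and> (f (A v) \<noteq> \<infinity> \<longrightarrow> \<Phi> v' < \<Phi> v)"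
    if v: "v \<in> Y - X" "f (Z v) \<noteq> \<infinity>" for v
  proof -
    from IHZ v(1) obtain v' where v'0: "v' \<in> Z v - X"
      and ih: "f (A v') + f (insert u (Z v - {v'})) \<le> f X + f (Z v)"
      unfolding EXc_def Z_def A_def by blast
    have v': "v' \<in> Y - X" "v' \<noteq> v" using v'0 Zs unfolding Z_def by auto
    define I where "I = (Y - {v} - {v'}) \<union> Zs"
    define J where "J = insert u Y"
    have cI: "card I = card Y - 2 + card Zs"
    proof -
      have "card (Y - {v} - {v'}) = card Y - 2" using v v' finY by (simp add: card_Diff_singleton_if)
      moreover have "(Y - {v} - {v'}) \<inter> Zs = {}" using Zs by auto
      ultimately show ?thesis unfolding I_def using finY finZs by (simp add: card_Un_disjoint)
    qed
    have cJ: "card J = card Y + 1" unfolding J_def using uX finY by simp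
    have ipi: "ip_index n I J" unfolding ip_index_def
    proof (intro conjI exI)
      show "I \<subseteq> {1..n}" unfolding I_def using Yn Zsn by auto
      show "J \<subseteq> {1..n}" unfolding J_def using Yn un by auto
      show "1 \<le> card Y - 1 + card Zs" "card Y - 1 + card Zs \<le> card Y" "card Y \<le> n"
        "card I = card Y - 1 + card Zs - 1" "card J = card Y + 1"
        using cI cJ cY Zs(4) by auto
    qed
    have JI: "J - I = {u, v, v'}" unfolding I_def J_def using v v' Zs uX by auto
    have "u \<noteq> v" "u \<noteq> v'" using v v' uX by auto
    then have c3: "card (J - I) = 3" unfolding JI using v' by auto
    from H3 ipi c3 have "trop_solves_ip f I J" by blast
    then obtain j1 j2 where j: "j1 \<in> J - I" "j2 \<in> J - I" "j1 \<noteq> j2"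
      and m: "\<forall>k\<in>J - I. ip_term_val f I J j1 \<le> ip_term_val f I J k \<and> ip_term_val f I J j2 \<le> ip_term_val f I J k"
      unfolding trop_solves_ip_def by blast
    have tv: "ip_term_val f I J v = f (Z v') + f (insert u (Y - {v}))"
    proof -
      have "insert v I = Z v'" unfolding I_def Z_def using v v' by auto
      moreover have "J - {v} = insert u (Y - {v})" unfolding J_def using v uX by auto
      ultimately show ?thesis unfolding ip_term_val_def by simp
    qed
    have tv': "ip_term_val f I J v' = f (Z v) + f (insert u (Y - {v'}))"
    proof -
      have "insert v' I = Z v" unfolding I_def Z_def using v v' by auto
      moreover have "J - {v'} = insert u (Y - {v'})" unfolding J_def using v' uX by auto
      ultimately show ?thesis unfolding ip_term_val_def by simp
    qed
    have tu: "ip_term_val f I J u = f (insert u (Z v - {v'})) + f Y"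
    proof -
      have "insert u I = insert u (Z v - {v'})" unfolding I_def Z_def using v v' Zs by auto
      moreover have "J - {u} = Y" unfolding J_def using uX by auto
      ultimately show ?thesis unfolding ip_term_val_def by simp
    qed
    have a1: "f (insert u (Z v - {v'})) + f Y < f (Z v) + f (insert u (Y - {v'}))
        \<and> f (A v') \<noteq> \<infinity> \<and> f (insert u (Z v - {v'})) \<noteq> \<infinity>"
      apply (rule arith1)
      using H1 fX fY v(2) ih viol v'(1) unfolding A_def by auto
    have "ip_term_val f I J u < ip_term_val f I J v'" using a1 tu tv' by simp
    then have "ip_term_val f I J v \<le> ip_term_val f I J u"
      using j m JI by (metis insert_iff not_le singletonD)
    then have le: "f (Z v') + f (insert u (Y - {v})) \<le> f (insert u (Z v - {v'})) + f Y"
      using tv tu by simp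
    have a2: "f (Z v') \<noteq> \<infinity> \<and> f (insert u (Y - {v})) \<noteq> \<infinity>"
      apply (rule arith2[OF _ _ _ _ le]) using a1 fY H1 by auto
    have "\<Phi> v' < \<Phi> v" if "f (A v) \<noteq> \<infinity>"
      unfolding \<Phi>_def
      apply (rule arith3[OF le ih])
      using viol v(1) unfolding A_def apply blast
      using H1 fX fY v(2) a1 a2 that unfolding A_def by auto
    then show ?thesis using v' a1 a2 by blast
  qed
  define F where "F = {w \<in> Y - X. f (Z w) \<noteq> \<infinity> \<and> f (A w) \<noteq> \<infinity>}"
  have finF: "finite F" unfolding F_def using finY by simp
  have neF: "F \<noteq> {}" using key[of v0] ex0 unfolding F_def Z_def by blast
  have fin\<Phi>: "finite (\<Phi> ` F)" "\<Phi> ` F \<noteq> {}" using finF neF by auto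
  obtain w where w: "w \<in> F" "\<Phi> w = Min (\<Phi> ` F)" using Min_in[OF fin\<Phi>] by force
  from w(1) have "w \<in> Y - X" "f (Z w) \<noteq> \<infinity>" "f (A w) \<noteq> \<infinity>" unfolding F_def by auto
  from key[OF this(1,2)] this(3) obtain w' where "w' \<in> F" "\<Phi> w' < \<Phi> w"
    unfolding F_def by blast
  moreover have "\<Phi> w \<le> \<Phi> w'" using w Min_le[OF fin\<Phi>(1)] \<open>w' \<in> F\<close> by simp
  ultimately show False by simp
qed

lemma card_swap: "finite A \<Longrightarrow> v \<in> A \<Longrightarrow> x \<notin> A \<Longrightarrow> card (insert x (A - {v})) = card A"
  by (metis Diff_iff card.insert card_Suc_Diff1 finite_Diff)

lemma main_EX:
  fixes f :: "nat set \<Rightarrow> ereal"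
  assumes H1: "\<forall>S. f S \<noteq> -\<infinity>"
  and H3: "\<forall>I J. ip_index n I J \<and> card (J - I) = 3 \<longrightarrow> trop_solves_ip f I J"
  and HM: "flag_matroid n (\<lambda>k. {I. I \<subseteq> {1..n} \<and> card I = k \<and> f I \<noteq> \<infinity>})"
  shows "X \<subseteq> {1..n} \<Longrightarrow> Y \<subseteq> {1..n} \<Longrightarrow> 1 \<le> card X \<Longrightarrow> card X \<le> card Y \<Longrightarrow> card Y \<le> n - 1
     \<Longrightarrow> u \<in> X - Y \<Longrightarrow> EXc f X Y u"
proof (induction "card (Y - X)" arbitrary: Y rule: less_induct)
  case less
  define M where "M = (\<lambda>k. {I. I \<subseteq> {1..n} \<and> card I = k \<and> f I \<noteq> \<infinity>})"
  have finX: "finite X" and finY: "finite Y" using less(2-7) finite_subset by blast+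
  have ne: "Y - X \<noteq> {}"
  proof
    assume "Y - X = {}"
    then have "Y \<subseteq> X - {u}" using less(2-7) by auto
    then have "card Y \<le> card (X - {u})" using finX by (simp add: card_mono)
    then show False using less(2-7) finX by auto
  qed
  show ?case
  proof (cases "f X = \<infinity> \<or> f Y = \<infinity>")
    case True
    then have inf: "f X + f Y = \<infinity>" by auto
    from ne obtain v where v: "v \<in> Y - X" by blast
    show ?thesis unfolding EXc_def inf using v by (intro bexI[of _ v]) simp_all
  next
    case False
    define d where "d = card (Y - X)"
    have d0: "d \<ge> 1" unfolding d_def using ne finY by (simp add: Suc_leI card_gt_0_iff)
    have dX: "card (X - Y) \<le> d" unfolding d_def using card_diff_le finX finY less(2-7) by blast
    consider "d = 1" | "d = 2" | "d \<ge> 3" using d0 by linarith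
    then show ?thesis
    proof cases
      case 1
      then obtain v where v: "Y - X = {v}" unfolding d_def by (meson card_1_singletonE)
      have "X - Y \<noteq> {}" using less(2-7) by auto
      then have "card (X - Y) = 1" using dX 1 finX by (simp add: card_gt_0_iff le_antisym Suc_leI)
      then obtain u' where "X - Y = {u'}" by (meson card_1_singletonE)
      then have u: "X - Y = {u}" using less(2-7) by auto
      have e1: "insert v (X - {u}) = Y" using u v by blast
      have e2: "insert u (Y - {v}) = X" using u v by blast
      show ?thesis unfolding EXc_def using v e1 e2 by (simp add: add.commute)
    next
      case 2
      define I where "I = X - {u}"
      define J where "J = insert u Y"
      have ipi: "ip_index n I J" unfolding ip_index_def
      proof (intro conjI exI)
        show "I \<subseteq> {1..n}" "J \<subseteq> {1..n}" unfolding I_def J_def using less(2-7) by auto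
        show "1 \<le> card X" "card X \<le> card Y" "card Y \<le> n" "card I = card X - 1" "card J = card Y + 1"
          unfolding I_def J_def using less(2-7) finX finY by auto
      qed
      have JI: "J - I = insert u (Y - X)" unfolding I_def J_def using less(2-7) by auto
      have "card (J - I) = 3" unfolding JI using 2 finY less(2-7) unfolding d_def by simp
      with H3 ipi have tr: "trop_solves_ip f I J" by blast
      have "u \<in> J - I" unfolding JI by simp
      have e1: "insert u I = X" unfolding I_def using less(2-7) by auto
      have e2: "J - {u} = Y" unfolding J_def using less(2-7) by auto
      from trop_to_EX[OF tr \<open>u \<in> J - I\<close>] show ?thesis unfolding e1 e2 .
    next
      case 3
      have l2: "X \<subseteq> {1..n}" and l3: "Y \<subseteq> {1..n}" and l4: "1 \<le> card X"
        and l5: "card X \<le> card Y" and l6: "card Y \<le> n - 1" and l7: "u \<in> X - Y"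
        using less(2-7) by auto
      show ?thesis
      proof (rule ccontr)
        assume nEX: "\<not> EXc f X Y u"
        have viol: "\<forall>w\<in>Y - X. f X + f Y < f (insert w (X - {u})) + f (insert u (Y - {w}))"
        proof
          fix w assume "w \<in> Y - X"
          then have "\<not> (f (insert w (X - {u})) + f (insert u (Y - {w})) \<le> f X + f Y)"
            using nEX unfolding EXc_def by blast
          then show "f X + f Y < f (insert w (X - {u})) + f (insert u (Y - {w}))" by simp
        qed
        have fX: "f X \<noteq> \<infinity>" and fY: "f Y \<noteq> \<infinity>" using False by auto
        have cY2: "2 \<le> card Y"
        proof -
          have "card (Y - X) \<le> card Y" using finY by (simp add: card_mono)
          then show ?thesis using 3 unfolding d_def by linarith
        qed
        have un: "u \<in> {1..n}" using l2 l7 by blast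
        have uX: "u \<in> X" "u \<notin> Y" using l7 by auto
        have XM: "X \<in> M (card X)" unfolding M_def using l2 fX by simp
        have YM: "Y \<in> M (card Y)" unfolding M_def using l3 fY by simp
        have cYr: "card Y \<in> {1..n-1}" using l4 l5 l6 by simp
        show False
        proof (cases "card X = card Y")
          case True
          have "card (X - Y) = d" unfolding d_def using card_diff_sym[OF finX finY True] .
          then have c2: "card (X - Y) \<ge> 2" using 3 by simp
          have "\<not> (X - Y \<subseteq> {u})"
          proof
            assume "X - Y \<subseteq> {u}"
            then have "card (X - Y) \<le> card {u}" by (intro card_mono) auto
            then show False using c2 by simp
          qed
          then obtain z where z: "z \<in> X - Y" "z \<noteq> u" by blast
          have mb: "matroid_bases {1..n} (M (card Y))" and ck: "\<forall>X\<in>M (card Y). card X = card Y"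
            using HM cYr unfolding flag_matroid_def M_def by blast+
          have XM': "X \<in> M (card Y)" using XM True by simp
          from dual_exch[OF mb ck XM' YM z(1)] obtain v0 where
            v0: "v0 \<in> Y - X" "insert z (Y - {v0}) \<in> M (card Y)" by blast
          have ex0: "f ((Y - {v0}) \<union> {z}) \<noteq> \<infinity>" using v0(2) unfolding M_def by simp
          have IHZ: "\<forall>v\<in>Y - X. EXc f X ((Y - {v}) \<union> {z}) u"
          proof
            fix v assume v: "v \<in> Y - X"
            let ?Z = "(Y - {v}) \<union> {z}"
            have eq: "?Z - X = (Y - X) - {v}" using z by auto
            have lt: "card (?Z - X) < card (Y - X)" unfolding eq using v finY
              by (meson card_Diff1_less finite_Diff)
            have "?Z = insert z (Y - {v})" by auto
            then have cZ: "card ?Z = card Y" using v z finY card_swap[of Y v z] by simp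
            have Zn: "?Z \<subseteq> {1..n}" using l2 l3 z by blast
            have uZ: "u \<in> X - ?Z" using l7 z by blast
            show "EXc f X ?Z u"
              by (rule less(1)[OF lt l2 Zn l4 _ _ uZ]) (use cZ l5 l6 in simp_all)
          qed
          have zs1: "{z} \<subseteq> X" "{z} \<inter> Y = {}" "u \<notin> {z}" "card {z} \<le> 1" "{z} \<subseteq> {1..n}"
            using z l2 by auto
          show False
            by (rule step_contra[OF H1 H3 l3 un cY2 l6 uX zs1 IHZ viol fX fY v0(1) ex0])
        next
          case False
          then have lt: "card X < card Y" using l5 by simp
          have fm: "flag_matroid n M" using HM unfolding M_def .
          from lemL[OF fm l4 lt l6 XM YM]
          obtain W where W: "W \<in> M (card Y - 1)" "X \<inter> Y \<subseteq> W" "W \<subseteq> Y" by blast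
          have cW: "card W = card Y - 1" using W(1) unfolding M_def by simp
          have finW: "finite W" using W(3) finY finite_subset by blast
          have "card (Y - W) = card Y - card W" using W(3) finW by (simp add: card_Diff_subset)
          then have "card (Y - W) = 1" using cW cY2 by simp
          then obtain v0 where v0: "Y - W = {v0}" by (meson card_1_singletonE)
          have Wv: "W = Y - {v0}" using v0 W(3) by blast
          have v0X: "v0 \<in> Y - X" using v0 W(2) by blast
          have ex0: "f ((Y - {v0}) \<union> {}) \<noteq> \<infinity>" using W(1) Wv unfolding M_def by simp
          have IHZ: "\<forall>v\<in>Y - X. EXc f X ((Y - {v}) \<union> {}) u"
          proof
            fix v assume v: "v \<in> Y - X"
            let ?Z = "Y - {v}"
            have eq: "?Z - X = (Y - X) - {v}" by auto
            have lt2: "card (?Z - X) < card (Y - X)" unfolding eq using v finY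
              by (meson card_Diff1_less finite_Diff)
            have cZ: "card ?Z = card Y - 1" using v finY by (simp add: card_Diff_singleton_if)
            have Zn: "?Z \<subseteq> {1..n}" using l3 by blast
            have uZ: "u \<in> X - ?Z" using l7 by blast
            have "EXc f X ?Z u"
              by (rule less(1)[OF lt2 l2 Zn l4 _ _ uZ]) (use cZ lt l6 in simp_all)
            then show "EXc f X (?Z \<union> {}) u" by simp
          qed
          have zs1: "{} \<subseteq> X" "{} \<inter> Y = {}" "u \<notin> {}" "card {} \<le> 1" "{} \<subseteq> {1..n}"
            by auto
          show False
            by (rule step_contra[OF H1 H3 l3 un cY2 l6 uX zs1 IHZ viol fX fY v0X ex0])
        qed
      qed
    qed
  qed
qed



lemma le_not_inf: fixes a b :: ereal shows "a \<le> b \<Longrightarrow> b \<noteq> \<infinity> \<Longrightarrow> a \<noteq> \<infinity>"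
  by auto
lemma sum_not_inf: fixes a b :: ereal shows "a \<noteq> \<infinity> \<Longrightarrow> b \<noteq> \<infinity> \<Longrightarrow> a + b \<noteq> \<infinity>"
  by (cases a; cases b) auto
lemma sum_inf: fixes a b :: ereal shows "a + b \<noteq> \<infinity> \<Longrightarrow> a \<noteq> \<infinity> \<and> b \<noteq> \<infinity>"
  by auto

lemma EX_fin:
  assumes "EXc P X Y u" "P X \<noteq> \<infinity>" "P Y \<noteq> \<infinity>"
  shows "\<exists>v\<in>Y - X. P (insert v (X - {u})) \<noteq> \<infinity> \<and> P (insert u (Y - {v})) \<noteq> \<infinity>"
proof -
  from assms(1) obtain v where v: "v \<in> Y - X" "P (insert v (X - {u})) + P (insert u (Y - {v})) \<le> P X + P Y"
    unfolding EXc_def by blast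
  have "P X + P Y \<noteq> \<infinity>" using assms(2,3) by (rule sum_not_inf)
  then have "P (insert v (X - {u})) + P (insert u (Y - {v})) \<noteq> \<infinity>" using v(2) le_not_inf by blast
  then show ?thesis using v(1) sum_inf by blast
qed

lemma concord_up:
  assumes ex: "\<And>X Y x. X \<in> A \<Longrightarrow> Y \<in> B \<Longrightarrow> x \<in> X - Y \<Longrightarrow> \<exists>v\<in>Y - X. insert x (Y - {v}) \<in> B"
    and XA: "X \<in> A" and fX: "finite X"
  shows "Y0 \<in> B \<Longrightarrow> \<exists>Y\<in>B. X \<subseteq> Y"
proof (induction "card (X - Y0)" arbitrary: Y0 rule: less_induct)
  case less
  show ?case
  proof (cases "X \<subseteq> Y0")
    case True then show ?thesis using less(2) by blast
  next
    case False
    then obtain x where x: "x \<in> X - Y0" by blast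
    from ex[OF XA less(2) x] obtain v where v: "v \<in> Y0 - X" "insert x (Y0 - {v}) \<in> B" by blast
    have eq: "X - insert x (Y0 - {v}) = (X - Y0) - {x}" using v by auto
    have "card (X - insert x (Y0 - {v})) < card (X - Y0)" unfolding eq using x fX
      by (meson card_Diff1_less finite_Diff)
    from less(1)[OF this v(2)] show ?thesis .
  qed
qed

lemma concord_down:
  assumes ex: "\<And>X Y x. X \<in> A \<Longrightarrow> Y \<in> B \<Longrightarrow> x \<in> X - Y \<Longrightarrow> \<exists>v\<in>Y - X. insert v (X - {x}) \<in> A"
    and YB: "Y \<in> B" and fA: "\<And>X. X \<in> A \<Longrightarrow> finite X"
  shows "X0 \<in> A \<Longrightarrow> \<exists>X\<in>A. X \<subseteq> Y"
proof (induction "card (X0 - Y)" arbitrary: X0 rule: less_induct)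
  case less
  show ?case
  proof (cases "X0 \<subseteq> Y")
    case True then show ?thesis using less(2) by blast
  next
    case False
    then obtain x where x: "x \<in> X0 - Y" by blast
    from ex[OF less(2) YB x] obtain v where v: "v \<in> Y - X0" "insert v (X0 - {x}) \<in> A" by blast
    have eq: "insert v (X0 - {x}) - Y = (X0 - Y) - {x}" using v by auto
    have "card (insert v (X0 - {x}) - Y) < card (X0 - Y)" unfolding eq using x fA[OF less(2)]
      by (meson card_Diff1_less finite_Diff)
    from less(1)[OF this v(2)] show ?thesis .
  qed
qed

lemma flag_from_EX:
  assumes tp: "in_TP_product n P"
  and EXall: "\<And>X Y u. X \<subseteq> {1..n} \<Longrightarrow> Y \<subseteq> {1..n} \<Longrightarrow> 1 \<le> card X \<Longrightarrow> card X \<le> card Y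
     \<Longrightarrow> card Y \<le> n - 1 \<Longrightarrow> u \<in> X - Y \<Longrightarrow> EXc P X Y u"
  shows "support_forms_flag_matroid n P"
proof -
  define M where "M = (\<lambda>k. {I. I \<subseteq> {1..n} \<and> card I = k \<and> P I \<noteq> \<infinity>})"
  have Mfin: "finite X" if "X \<in> M k" for X k using that finite_subset[of X "{1..n}"] unfolding M_def by auto
  have part1: "matroid_bases {1..n} (M k) \<and> (\<forall>X\<in>M k. card X = k)" if k: "k \<in> {1..n-1}" for k
  proof -
    obtain I0 where I0: "I0 \<subseteq> {1..n}" "card I0 = k" "P I0 \<noteq> \<infinity>"
      using tp k unfolding in_TP_product_def by blast
    then have ne: "M k \<noteq> {}" unfolding M_def by blast
    have ex: "\<exists>y\<in>B2 - B1. insert y (B1 - {x}) \<in> M k" if B: "B1 \<in> M k" "B2 \<in> M k" "x \<in> B1 - B2" for B1 B2 x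
    proof -
      have B1: "B1 \<subseteq> {1..n}" "card B1 = k" "P B1 \<noteq> \<infinity>" using B(1) unfolding M_def by auto
      have B2: "B2 \<subseteq> {1..n}" "card B2 = k" "P B2 \<noteq> \<infinity>" using B(2) unfolding M_def by auto
      have "EXc P B1 B2 x" using B1 B2 k B(3) by (intro EXall) auto
      from EX_fin[OF this B1(3) B2(3)] obtain y where y: "y \<in> B2 - B1" "P (insert y (B1 - {x})) \<noteq> \<infinity>"
        by blast
      have "card (insert y (B1 - {x})) = card B1" using y B(3) Mfin[OF B(1)] by (intro card_swap) auto
      then have "card (insert y (B1 - {x})) = k" using B1 by simp
      moreover have "insert y (B1 - {x}) \<subseteq> {1..n}" using y B1 B2 by blast
      ultimately have "insert y (B1 - {x}) \<in> M k" using y unfolding M_def by blast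
      then show ?thesis using y by blast
    qed
    have sub: "\<forall>X\<in>M k. X \<subseteq> {1..n}" and ck: "\<forall>X\<in>M k. card X = k" unfolding M_def by auto
    have "matroid_bases {1..n} (M k)" unfolding matroid_bases_def
      using ne sub ex by blast
    then show ?thesis using ck by blast
  qed
  have Mmem: "X \<subseteq> {1..n} \<and> card X = m \<and> P X \<noteq> \<infinity>" if "X \<in> M m" for X m
    using that unfolding M_def by simp
  have Mintro: "X \<in> M m" if "X \<subseteq> {1..n}" "card X = m" "P X \<noteq> \<infinity>" for X m
    using that unfolding M_def by simp
  have neM: "M m \<noteq> {}" if "1 \<le> m" "m \<le> n - 1" for m
  proof -
    have "m \<in> {1..n-1}" using that by simp
    then obtain I0 where "I0 \<subseteq> {1..n}" "card I0 = m" "P I0 \<noteq> \<infinity>"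
      using tp unfolding in_TP_product_def by blast
    then show ?thesis using Mintro by blast
  qed
  have exch2: "\<exists>v\<in>Y - X. insert v (X - {x}) \<in> M j \<and> insert x (Y - {v}) \<in> M k"
    if jk: "1 \<le> j" "j \<le> k" "k \<le> n - 1" and X: "X \<in> M j" and Y: "Y \<in> M k" and x: "x \<in> X - Y"
    for j k X Y x
  proof -
    have mX: "X \<subseteq> {1..n}" "card X = j" "P X \<noteq> \<infinity>" using Mmem[OF X] by auto
    have mY: "Y \<subseteq> {1..n}" "card Y = k" "P Y \<noteq> \<infinity>" using Mmem[OF Y] by auto
    have "EXc P X Y x" using mX mY jk x by (intro EXall) auto
    from EX_fin[OF this mX(3) mY(3)] obtain v where v: "v \<in> Y - X"
      "P (insert v (X - {x})) \<noteq> \<infinity>" "P (insert x (Y - {v})) \<noteq> \<infinity>" by blast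
    have c1: "card (insert v (X - {x})) = j" using v x Mfin[OF X] mX by (subst card_swap) auto
    have c2: "card (insert x (Y - {v})) = k" using v x Mfin[OF Y] mY by (subst card_swap) auto
    have s1: "insert v (X - {x}) \<subseteq> {1..n}" using v x mX mY by blast
    have s2: "insert x (Y - {v}) \<subseteq> {1..n}" using v x mX mY by blast
    show ?thesis using Mintro[OF s1 c1 v(2)] Mintro[OF s2 c2 v(3)] v(1) by blast
  qed
  have part2: "(\<forall>X\<in>M j. \<exists>Y\<in>M k. X \<subseteq> Y) \<and> (\<forall>Y\<in>M k. \<exists>X\<in>M j. X \<subseteq> Y)"
    if jk: "1 \<le> j" "j < k" "k \<le> n - 1" for j k
  proof -
    have jk': "1 \<le> j" "j \<le> k" "k \<le> n - 1" using jk by auto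
    have "M k \<noteq> {}" "M j \<noteq> {}" using neM jk by auto
    then obtain Y0 X0 where Y0: "Y0 \<in> M k" and X0: "X0 \<in> M j" by blast
    have exU: "\<exists>v\<in>Y - X. insert x (Y - {v}) \<in> M k" if "X \<in> M j" "Y \<in> M k" "x \<in> X - Y" for X Y x
      using exch2[OF jk' that] by blast
    have exD: "\<exists>v\<in>Y - X. insert v (X - {x}) \<in> M j" if "X \<in> M j" "Y \<in> M k" "x \<in> X - Y" for X Y x
      using exch2[OF jk' that] by blast
    have A: "\<forall>X\<in>M j. \<exists>Y\<in>M k. X \<subseteq> Y"
    proof
      fix X assume X: "X \<in> M j"
      show "\<exists>Y\<in>M k. X \<subseteq> Y" by (rule concord_up[OF exU X Mfin[OF X] Y0])
    qed
    have B: "\<forall>Y\<in>M k. \<exists>X\<in>M j. X \<subseteq> Y"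
    proof
      fix Y assume Y: "Y \<in> M k"
      show "\<exists>X\<in>M j. X \<subseteq> Y" by (rule concord_down[OF exD Y Mfin X0])
    qed
    show ?thesis using A B by blast
  qed
  have "flag_matroid n M" unfolding flag_matroid_def
    apply (rule conjI)
     apply (intro ballI)
     apply (erule part1)
    apply (intro allI impI)
    apply (elim conjE)
    apply (erule part2; assumption)
    done
  then show ?thesis unfolding support_forms_flag_matroid_def M_def by simp
qed


definition Qf :: "(nat set \<Rightarrow> ereal) \<Rightarrow> nat set \<Rightarrow> ereal" where
  "Qf P = (\<lambda>S. if P S = -\<infinity> then \<infinity> else P S)"

lemma ipi_XY:
  assumes "X \<subseteq> {1..n}" "Y \<subseteq> {1..n}" "1 \<le> card X" "card X \<le> card Y" "card Y \<le> n - 1" "u \<in> X - Y"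
  shows "ip_index n (X - {u}) (insert u Y)"
proof -
  have finX: "finite X" and finY: "finite Y" using assms(1,2) finite_subset by blast+
  show ?thesis unfolding ip_index_def
  proof (intro conjI exI)
    show "X - {u} \<subseteq> {1..n}" "insert u Y \<subseteq> {1..n}" using assms by auto
    show "1 \<le> card X" "card X \<le> card Y" "card Y \<le> n" "card (X - {u}) = card X - 1"
      "card (insert u Y) = card Y + 1" using assms finX finY by auto
  qed
qed

lemma ip_cards:
  assumes "ip_index n I J" "x \<in> J - I"
  shows "insert x I \<subseteq> {1..n}" "J - {x} \<subseteq> {1..n}" "1 \<le> card (insert x I)"
    "card (insert x I) \<le> card (J - {x})" "card (J - {x}) \<le> n - 1"
proof -
  obtain r s where rs: "I \<subseteq> {1..n}" "J \<subseteq> {1..n}" "1 \<le> r" "r \<le> s" "s \<le> n" "card I = r - 1" "card J = s + 1"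
    using assms(1) unfolding ip_index_def by blast
  have finI: "finite I" and finJ: "finite J" using rs(1,2) finite_subset by blast+
  have cI: "card (insert x I) = r" using assms(2) finI rs by simp
  have cJ: "card (J - {x}) = s" using assms(2) finJ rs by simp
  have "card J \<le> card {1..n}" using rs(2) by (intro card_mono) auto
  then have "card J \<le> n" by simp
  show "insert x I \<subseteq> {1..n}" "J - {x} \<subseteq> {1..n}" using rs assms(2) by auto
  show "1 \<le> card (insert x I)" "card (insert x I) \<le> card (J - {x})" "card (J - {x}) \<le> n - 1"
    using cI cJ rs \<open>card J \<le> n\<close> by auto
qed

lemma trop_cong:
  assumes "\<forall>j\<in>J - I. ip_term_val f I J j = ip_term_val g I J j"
  shows "trop_solves_ip f I J = trop_solves_ip g I J"
proof -
  have *: "trop_solves_ip g I J" if "trop_solves_ip f I J" "\<forall>j\<in>J - I. ip_term_val f I J j = ip_term_val g I J j"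
    for f g :: "nat set \<Rightarrow> ereal"
  proof -
    from that(1) obtain j1 j2 where j: "j1 \<in> J - I" "j2 \<in> J - I" "j1 \<noteq> j2"
      and m: "\<forall>k\<in>J - I. ip_term_val f I J j1 \<le> ip_term_val f I J k \<and> ip_term_val f I J j2 \<le> ip_term_val f I J k"
      unfolding trop_solves_ip_def by blast
    have "\<forall>k\<in>J - I. ip_term_val g I J j1 \<le> ip_term_val g I J k \<and> ip_term_val g I J j2 \<le> ip_term_val g I J k"
    proof
      fix k assume k: "k \<in> J - I"
      have "ip_term_val g I J j1 = ip_term_val f I J j1" "ip_term_val g I J j2 = ip_term_val f I J j2"
        "ip_term_val g I J k = ip_term_val f I J k" using that(2) j k by auto
      then show "ip_term_val g I J j1 \<le> ip_term_val g I J k \<and> ip_term_val g I J j2 \<le> ip_term_val g I J k"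
        using m k by simp
    qed
    then show ?thesis unfolding trop_solves_ip_def using j by blast
  qed
  show ?thesis using *[of f g] *[of g f] assms by auto
qed

lemma rel_noinf:
  assumes "in_TP_product n P" "S \<subseteq> {1..n}" "1 \<le> card S" "card S \<le> n - 1"
  shows "P S \<noteq> -\<infinity>"
  using assms unfolding in_TP_product_def by blast

lemma trop_PQ:
  assumes tp: "in_TP_product n P" and ipi: "ip_index n I J"
  shows "trop_solves_ip (Qf P) I J = trop_solves_ip P I J"
proof (rule trop_cong, rule ballI)
  fix j assume j: "j \<in> J - I"
  note c = ip_cards[OF ipi j]
  have "P (insert j I) \<noteq> -\<infinity>" by (rule rel_noinf[OF tp c(1) c(3)]) (use c in linarith)
  moreover have "P (J - {j}) \<noteq> -\<infinity>" by (rule rel_noinf[OF tp c(2)]) (use c in linarith)+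
  ultimately show "ip_term_val (Qf P) I J j = ip_term_val P I J j"
    unfolding ip_term_val_def Qf_def by simp
qed

lemma flag_cong:
  assumes fm: "flag_matroid n M" and e: "\<And>k. k \<in> {1..n-1} \<Longrightarrow> M' k = M k"
  shows "flag_matroid n M'"
proof -
  have p1: "\<forall>k\<in>{1..n-1}. matroid_bases {1..n} (M k) \<and> (\<forall>X\<in>M k. card X = k)"
   and p2: "\<forall>j k. 1 \<le> j \<and> j < k \<and> k \<le> n - 1 \<longrightarrow>
        (\<forall>X\<in>M j. \<exists>Y\<in>M k. X \<subseteq> Y) \<and> (\<forall>Y\<in>M k. \<exists>X\<in>M j. X \<subseteq> Y)"
    using fm unfolding flag_matroid_def by blast+
  have q1: "\<forall>k\<in>{1..n-1}. matroid_bases {1..n} (M' k) \<and> (\<forall>X\<in>M' k. card X = k)"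
  proof
    fix k assume k: "k \<in> {1..n-1}"
    then show "matroid_bases {1..n} (M' k) \<and> (\<forall>X\<in>M' k. card X = k)" using p1 e[OF k] by simp
  qed
  have q2: "\<forall>j k. 1 \<le> j \<and> j < k \<and> k \<le> n - 1 \<longrightarrow>
        (\<forall>X\<in>M' j. \<exists>Y\<in>M' k. X \<subseteq> Y) \<and> (\<forall>Y\<in>M' k. \<exists>X\<in>M' j. X \<subseteq> Y)"
  proof (intro allI impI)
    fix j k assume jk: "1 \<le> j \<and> j < k \<and> k \<le> n - 1"
    then have "j \<in> {1..n-1}" "k \<in> {1..n-1}" by auto
    then have "M' j = M j" "M' k = M k" using e by auto
    then show "(\<forall>X\<in>M' j. \<exists>Y\<in>M' k. X \<subseteq> Y) \<and> (\<forall>Y\<in>M' k. \<exists>X\<in>M' j. X \<subseteq> Y)"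
      using p2[rule_format, OF jk] by simp
  qed
  show ?thesis unfolding flag_matroid_def using q1 q2 by (rule conjI)
qed

theorem theorem4:
  fixes n :: nat
  assumes "n \<ge> 2"
  shows "FlDr_3M n = FlDr n"
proof (intro set_eqI iffI)
  fix P assume "P \<in> FlDr_3M n"
  then have tp: "in_TP_product n P"
    and h3: "\<forall>I J. ip_index n I J \<and> card (J - I) = 3 \<longrightarrow> trop_solves_ip P I J"
    and sf: "support_forms_flag_matroid n P"
    unfolding FlDr_3M_def by auto
  define Q where "Q = Qf P"
  have H1: "\<forall>S. Q S \<noteq> -\<infinity>" unfolding Q_def Qf_def by simp
  have H3: "\<forall>I J. ip_index n I J \<and> card (J - I) = 3 \<longrightarrow> trop_solves_ip Q I J"
    using h3 trop_PQ[OF tp] unfolding Q_def by blast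
  have HM: "flag_matroid n (\<lambda>k. {I. I \<subseteq> {1..n} \<and> card I = k \<and> Q I \<noteq> \<infinity>})"
  proof (rule flag_cong)
    show "flag_matroid n (\<lambda>k. {I. I \<subseteq> {1..n} \<and> card I = k \<and> P I \<noteq> \<infinity>})"
      using sf unfolding support_forms_flag_matroid_def .
    fix k assume k: "k \<in> {1..n-1}"
    show "{I. I \<subseteq> {1..n} \<and> card I = k \<and> Q I \<noteq> \<infinity>} = {I. I \<subseteq> {1..n} \<and> card I = k \<and> P I \<noteq> \<infinity>}"
    proof (intro Collect_cong conj_cong refl)
      fix I assume "I \<subseteq> {1..n}" "card I = k"
      then have "P I \<noteq> -\<infinity>" using rel_noinf[OF tp] k by auto
      then show "(Q I \<noteq> \<infinity>) = (P I \<noteq> \<infinity>)" unfolding Q_def Qf_def by simp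
    qed
  qed
  have "trop_solves_ip P I J" if ipi: "ip_index n I J" for I J
  proof -
    have finJ: "finite J" using ipi unfolding ip_index_def by (meson finite_atLeastAtMost finite_subset)
    have ne: "J - I \<noteq> {}"
    proof
      assume "J - I = {}"
      then have "J \<subseteq> I" by blast
      moreover obtain r s where "I \<subseteq> {1..n}" "1 \<le> r" "r \<le> s" "card I = r - 1" "card J = s + 1"
        using ipi unfolding ip_index_def by blast
      moreover have "finite I" using calculation(2) finite_subset by blast
      ultimately show False using card_mono[of I J] by auto
    qed
    have "\<forall>x\<in>J - I. EXc Q (insert x I) (J - {x}) x"
    proof
      fix x assume x: "x \<in> J - I"
      note c = ip_cards[OF ipi x]
      have "x \<in> insert x I - (J - {x})" by simp
      from main_EX[OF H1 H3 HM c this] show "EXc Q (insert x I) (J - {x}) x" .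
    qed
    from EX_to_trop[OF finJ ne this] have "trop_solves_ip Q I J" .
    then show ?thesis using trop_PQ[OF tp ipi] unfolding Q_def by simp
  qed
  then show "P \<in> FlDr n" unfolding FlDr_def using tp by blast
next
  fix P assume "P \<in> FlDr n"
  then have tp: "in_TP_product n P" and tr: "\<forall>I J. ip_index n I J \<longrightarrow> trop_solves_ip P I J"
    unfolding FlDr_def by auto
  have EXall: "EXc P X Y u" if "X \<subseteq> {1..n}" "Y \<subseteq> {1..n}" "1 \<le> card X" "card X \<le> card Y"
     "card Y \<le> n - 1" "u \<in> X - Y" for X Y u
  proof -
    have ipi: "ip_index n (X - {u}) (insert u Y)" by (rule ipi_XY[OF that])
    have "u \<in> insert u Y - (X - {u})" by simp
    from trop_to_EX[OF tr[rule_format, OF ipi] this] show ?thesis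
      using that(6) by (simp add: insert_absorb)
  qed
  have "support_forms_flag_matroid n P" by (rule flag_from_EX[OF tp EXall])
  then show "P \<in> FlDr_3M n" unfolding FlDr_3M_def using tp tr by blast
qed

end
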